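(* Let $S$ be a semigroup with involution, $\phi:S\to\mathbb{H}$ positive definite, and $\lambda$ the representation of $S$ on the quaternionic pre-Hilbert space $H_\phi$ defined below. Then $\phi$ is exponentially bounded (i.e. $\alpha$-bounded for some absolute value $\alpha$ on $S$) if and only if $\lambda(s)$ is a bounded operator on $H_\phi$ (with respect to the norm $\|f\|=\langle f,f\rangle^{1/2}$) for every $s\in S$.
   Context: $\mathbb{H}$ is the real quaternion algebra. A semigroup with involution is a set $S$ with an associative binary operation $\circ$ with neutral element $e$ and a bijection $s\mapsto s^*$ with $(s^* )^*=s$, $(s\circ t)^*=t^*\circ s^*$. $\phi:S\to\mathbb{H}$ is positive definite if $\sum_{i,j=1}^k \overline{q_i}\phi(s_i^*\circ s_j)q_j$ is a nonnegative real number for all $k$, $s_i\in S$, $q_i\in\mathbb{H}$. An absolute value on $S$ is $\alpha:S\to[0,\infty)$ with $\alpha(e)=1$, $\alpha(s\circ t)\le\alpha(s)\alpha(t)$, $\alpha(s^* )=\alpha(s)$; $\phi$ is $\alpha$-bounded if $|\phi(s)|\le C\alpha(s)$ for all $s$ and some $C>0$. For $s\in S$ let $\phi_s:S\to\mathbb{H}$, $\phi_s(t)=\phi(t^*\circ s)$. $H_\phi$ is the right $\mathbb{H}$-linear span (scalars acting pointwise from the right) of $\{\phi_s\}_{s\in S}$ inside $\mathbb{H}^S$, with the quaternionic inner product $\langle \sum_s\phi_sq_s,\sum_t\phi_tp_t\rangle=\sum_{s,t}\overline{p_t}\,\phi(t^*\circ s)\,q_s$ (finite sums). The representation $\lambda$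 is given by $\lambda(s)\big(\sum_t\phi_tq_t\big)=\sum_t\phi_{s\circ t}q_t$. *)

theory Defs
  imports Complex_Main
begin

datatype quat = Quat (qRe: real) (qIm1: real) (qIm2: real) (qIm3: real)

lemma quat_eq_iff: "x = y \<longleftrightarrow> qRe x = qRe y \<and> qIm1 x = qIm1 y \<and> qIm2 x = qIm2 y \<and> qIm3 x = qIm3 y"
  by (cases x; cases y) auto

instantiation quat :: ring_1
begin
definition "0 = Quat 0 0 0 0"
definition "1 = Quat 1 0 0 0"
definition "x + y = Quat (qRe x + qRe y) (qIm1 x + qIm1 y) (qIm2 x + qIm2 y) (qIm3 x + qIm3 y)"
definition "- x = Quat (- qRe x) (- qIm1 x) (- qIm2 x) (- qIm3 x)"
definition "x - y = Quat (qRe x - qRe y) (qIm1 x - qIm1 y) (qIm2 x - qIm2 y) (qIm3 x - qIm3 y)"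
definition "x * y = Quat
   (qRe x * qRe y - qIm1 x * qIm1 y - qIm2 x * qIm2 y - qIm3 x * qIm3 y)
   (qRe x * qIm1 y + qIm1 x * qRe y + qIm2 x * qIm3 y - qIm3 x * qIm2 y)
   (qRe x * qIm2 y - qIm1 x * qIm3 y + qIm2 x * qRe y + qIm3 x * qIm1 y)
   (qRe x * qIm3 y + qIm1 x * qIm2 y - qIm2 x * qIm1 y + qIm3 x * qRe y)"
instance
  by standard (auto simp: quat_eq_iff zero_quat_def one_quat_def plus_quat_def
      uminus_quat_def minus_quat_def times_quat_def algebra_simps)
end

definition qcnj :: "quat \<Rightarrow> quat" where
  "qcnj x = Quat (qRe x) (- qIm1 x) (- qIm2 x) (- qIm3 x)"

definition qabs :: "quat \<Rightarrow> real" where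
  "qabs x = sqrt ((qRe x)\<^sup>2 + (qIm1 x)\<^sup>2 + (qIm2 x)\<^sup>2 + (qIm3 x)\<^sup>2)"

definition qreal :: "real \<Rightarrow> quat" where
  "qreal r = Quat r 0 0 0"

definition qnonneg_real :: "quat \<Rightarrow> bool" where
  "qnonneg_real x \<longleftrightarrow> (\<exists>r\<ge>0. x = qreal r)"

text \<open>A semigroup with involution on the carrier type 'a with operation mult,
  neutral element e and involution st (s \<mapsto> s^*).  Bijectivity of st follows
  from st (st s) = s.\<close>
definition semigroup_involution :: "('a \<Rightarrow> 'a \<Rightarrow> 'a) \<Rightarrow> 'a \<Rightarrow> ('a \<Rightarrow> 'a) \<Rightarrow> bool" where
  "semigroup_involution mult e st \<longleftrightarrow>
     (\<forall>s t u. mult (mult s t) u = mult s (mult t u)) \<and>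
     (\<forall>s. mult e s = s \<and> mult s e = s) \<and>
     bij st \<and>
     (\<forall>s. st (st s) = s) \<and>
     (\<forall>s t. st (mult s t) = mult (st t) (st s))"

definition positive_definite ::
  "('a \<Rightarrow> 'a \<Rightarrow> 'a) \<Rightarrow> ('a \<Rightarrow> 'a) \<Rightarrow> ('a \<Rightarrow> quat) \<Rightarrow> bool" where
  "positive_definite mult st \<phi> \<longleftrightarrow>
     (\<forall>(k::nat) (s::nat \<Rightarrow> 'a) (q::nat \<Rightarrow> quat).
        qnonneg_real (\<Sum>i\<in>{1..k}. \<Sum>j\<in>{1..k}. qcnj (q i) * \<phi> (mult (st (s i)) (s j)) * q j))"

definition absolute_value ::
  "('a \<Rightarrow> 'a \<Rightarrow> 'a) \<Rightarrow> 'a \<Rightarrow> ('a \<Rightarrow> 'a) \<Rightarrow> ('a \<Rightarrow> real) \<Rightarrow> bool" where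
  "absolute_value mult e st \<alpha> \<longleftrightarrow>
     (\<forall>s. \<alpha> s \<ge> 0) \<and> \<alpha> e = 1 \<and>
     (\<forall>s t. \<alpha> (mult s t) \<le> \<alpha> s * \<alpha> t) \<and>
     (\<forall>s. \<alpha> (st s) = \<alpha> s)"

definition alpha_bounded :: "('a \<Rightarrow> real) \<Rightarrow> ('a \<Rightarrow> quat) \<Rightarrow> bool" where
  "alpha_bounded \<alpha> \<phi> \<longleftrightarrow> (\<exists>C>0. \<forall>s. qabs (\<phi> s) \<le> C * \<alpha> s)"

definition exponentially_bounded ::
  "('a \<Rightarrow> 'a \<Rightarrow> 'a) \<Rightarrow> 'a \<Rightarrow> ('a \<Rightarrow> 'a) \<Rightarrow> ('a \<Rightarrow> quat) \<Rightarrow> bool" where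
  "exponentially_bounded mult e st \<phi> \<longleftrightarrow>
     (\<exists>\<alpha>. absolute_value mult e st \<alpha> \<and> alpha_bounded \<alpha> \<phi>)"

text \<open>Elements of H_phi are finite sums  sum_t phi_t q_t, represented by finite
  lists of pairs (t, q_t).  hvec gives the actual function S \<Rightarrow> H of such a sum.\<close>

definition phi_s :: "('a \<Rightarrow> 'a \<Rightarrow> 'a) \<Rightarrow> ('a \<Rightarrow> 'a) \<Rightarrow> ('a \<Rightarrow> quat) \<Rightarrow> 'a \<Rightarrow> 'a \<Rightarrow> quat" where
  "phi_s mult st \<phi> s = (\<lambda>t. \<phi> (mult (st t) s))"

definition hvec :: "('a \<Rightarrow> 'a \<Rightarrow> 'a) \<Rightarrow> ('a \<Rightarrow> 'a) \<Rightarrow> ('a \<Rightarrow> quat) \<Rightarrow> ('a \<times> quat) list \<Rightarrow> 'a \<Rightarrow> quat" where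
  "hvec mult st \<phi> xs = (\<lambda>u. \<Sum>(t, q)\<leftarrow>xs. phi_s mult st \<phi> t u * q)"

definition H_phi :: "('a \<Rightarrow> 'a \<Rightarrow> 'a) \<Rightarrow> ('a \<Rightarrow> 'a) \<Rightarrow> ('a \<Rightarrow> quat) \<Rightarrow> ('a \<Rightarrow> quat) set" where
  "H_phi mult st \<phi> = range (hvec mult st \<phi>)"

definition hinner :: "('a \<Rightarrow> 'a \<Rightarrow> 'a) \<Rightarrow> ('a \<Rightarrow> 'a) \<Rightarrow> ('a \<Rightarrow> quat) \<Rightarrow>
    ('a \<times> quat) list \<Rightarrow> ('a \<times> quat) list \<Rightarrow> quat" where
  "hinner mult st \<phi> xs ys = (\<Sum>(s, q)\<leftarrow>xs. \<Sum>(t, p)\<leftarrow>ys. qcnj p * \<phi> (mult (st t) s) * q)"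

definition hnorm :: "('a \<Rightarrow> 'a \<Rightarrow> 'a) \<Rightarrow> ('a \<Rightarrow> 'a) \<Rightarrow> ('a \<Rightarrow> quat) \<Rightarrow> ('a \<times> quat) list \<Rightarrow> real" where
  "hnorm mult st \<phi> xs = sqrt (qRe (hinner mult st \<phi> xs xs))"

definition hlambda :: "('a \<Rightarrow> 'a \<Rightarrow> 'a) \<Rightarrow> 'a \<Rightarrow> ('a \<times> quat) list \<Rightarrow> ('a \<times> quat) list" where
  "hlambda mult s xs = map (\<lambda>(t, q). (mult s t, q)) xs"

definition lambda_bounded ::
  "('a \<Rightarrow> 'a \<Rightarrow> 'a) \<Rightarrow> ('a \<Rightarrow> 'a) \<Rightarrow> ('a \<Rightarrow> quat) \<Rightarrow> 'a \<Rightarrow> bool" where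
  "lambda_bounded mult st \<phi> s \<longleftrightarrow>
     (\<exists>C. \<forall>xs. hnorm mult st \<phi> (hlambda mult s xs) \<le> C * hnorm mult st \<phi> xs)"

end

theory Submission
  imports Defs
begin


lemma qcnj_mult: "qcnj (a*b) = qcnj b * qcnj a"
  by (simp add: quat_eq_iff qcnj_def times_quat_def algebra_simps)
lemma qcnj_qcnj[simp]: "qcnj (qcnj a) = a"
  by (simp add: quat_eq_iff qcnj_def)
lemma qRe_qcnj[simp]: "qRe (qcnj a) = qRe a" by (simp add: qcnj_def)
lemma qRe_add[simp]: "qRe (a+b) = qRe a + qRe b" by (simp add: plus_quat_def)
lemma qRe_zero[simp]: "qRe 0 = 0" by (simp add: zero_quat_def)
lemma qRe_one[simp]: "qRe 1 = 1" by (simp add: one_quat_def)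
lemma qRe_sum_list: "qRe (sum_list (map f xs)) = sum_list (map (\<lambda>x. qRe (f x)) xs)"
  by (induction xs) auto
lemma qabs_nonneg: "qabs a \<ge> 0" by (simp add: qabs_def)
lemma qabs_mult: "qabs (a*b) = qabs a * qabs b"
proof -
  have "(qRe (a*b))\<^sup>2 + (qIm1 (a*b))\<^sup>2 + (qIm2 (a*b))\<^sup>2 + (qIm3 (a*b))\<^sup>2
      = ((qRe a)\<^sup>2 + (qIm1 a)\<^sup>2 + (qIm2 a)\<^sup>2 + (qIm3 a)\<^sup>2) * ((qRe b)\<^sup>2 + (qIm1 b)\<^sup>2 + (qIm2 b)\<^sup>2 + (qIm3 b)\<^sup>2)"
    by (simp add: times_quat_def power2_eq_square algebra_simps)
  thus ?thesis by (simp add: qabs_def real_sqrt_mult)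
qed
lemma qabs_qcnj[simp]: "qabs (qcnj a) = qabs a" by (simp add: qabs_def qcnj_def)
lemma qRe_le_qabs: "qRe a \<le> qabs a"
proof -
  have "qRe a \<le> sqrt ((qRe a)\<^sup>2)" by simp
  also have "\<dots> \<le> qabs a" unfolding qabs_def by (rule real_sqrt_le_mono) simp
  finally show ?thesis .
qed
lemma qabs_qreal: "r \<ge> 0 \<Longrightarrow> qabs (qreal r) = r" by (simp add: qabs_def qreal_def)
lemma mult_qcnj: "a * qcnj a = qreal ((qabs a)\<^sup>2)"
  by (simp add: quat_eq_iff qcnj_def times_quat_def qabs_def qreal_def algebra_simps power2_eq_square)
lemma qRe_sandwich: "qRe (qcnj q * qreal r * q) = r * (qabs q)\<^sup>2"
  by (simp add: qcnj_def times_quat_def qabs_def qreal_def algebra_simps power2_eq_square)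
lemma qRe_swap: "qRe (qcnj q * qcnj c * p) = qRe (qcnj p * c * q)"
  by (simp add: qcnj_def times_quat_def algebra_simps)
lemma qabs_zero_iff: "qabs a = 0 \<longleftrightarrow> a = 0"
  by (simp add: qabs_def quat_eq_iff zero_quat_def add_nonneg_eq_0_iff)


lemma chain_pow:
  fixes n :: "nat \<Rightarrow> real"
  assumes A: "A \<ge> 0" and nn: "\<And>m. n m \<ge> 0" and sq: "\<And>m. (n m)\<^sup>2 \<le> A * n (2*m)"
  shows "n 1 ^ (2^k) \<le> A ^ (2^k - 1) * n (2^k)"
proof (induction k)
  case 0 thus ?case by simp
next
  case (Suc k)
  have "n 1 ^ (2^Suc k) = (n 1 ^ (2^k))\<^sup>2" by (simp add: power_mult[symmetric] mult.commute)
  also have "\<dots> \<le> (A ^ (2^k - 1) * n (2^k))\<^sup>2"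
    using Suc nn by (intro power_mono) (auto)
  also have "\<dots> = A ^ (2^(Suc k) - 2) * (n (2^k))\<^sup>2"
  proof -
    have k1: "(1::nat) \<le> 2^k" by simp
    have ee: "(2::nat)^(Suc k) - 2 = (2^k - 1) + (2^k - 1)" using k1 by (simp only: power_Suc)
    have "(A ^ (2^k - 1))\<^sup>2 = A ^ (2^(Suc k) - 2)"
      by (simp only: ee power_add power2_eq_square)
    thus ?thesis by (simp add: power_mult_distrib)
  qed
  also have "\<dots> \<le> A ^ (2^(Suc k) - 2) * (A * n (2^Suc k))"
    using sq[of "2^k"] A by (intro mult_left_mono) auto
  also have "\<dots> = A ^ (2^(Suc k) - 1) * n (2^Suc k)"
  proof -
    have k2: "(2::nat) \<le> 2^(Suc k)" by simp
    have "2^(Suc k) - 1 = Suc (2^(Suc k) - 2)" using k2 by linarith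
    thus ?thesis by (simp add: mult.assoc mult.left_commute)
  qed
  finally show ?case .
qed

lemma chain:
  fixes n :: "nat \<Rightarrow> real"
  assumes A: "A \<ge> 0" and g: "\<gamma> \<ge> 0" and D: "D \<ge> 0" and nn: "\<And>m. n m \<ge> 0"
    and sq: "\<And>m. (n m)\<^sup>2 \<le> A * n (2*m)" and bd: "\<And>m. n m \<le> D * \<gamma> ^ m"
  shows "n 1 \<le> A * \<gamma>"
proof (rule ccontr)
  assume H: "\<not> n 1 \<le> A * \<gamma>"
  have cp: "n 1 ^ (2^k) \<le> A ^ (2^k - 1) * (D * \<gamma> ^ (2^k))" for k
    using chain_pow[where A=A and n=n and k=k, OF A nn sq] bd[of "2^k"] A
    by (meson mult_left_mono order_trans zero_le_power)
  show False
  proof (cases "A = 0 \<or> \<gamma> = 0")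
    case True
    have "n 1 ^ 2 \<le> 0" using cp[of 1] True by auto
    hence "n 1 = 0" using nn[of 1] by (simp add: power2_eq_square mult_le_0_iff) 
    thus False using H A g by simp
  next
    case False
    hence Ap: "A > 0" and gp: "\<gamma> > 0" using A g by auto
    define x where "x = n 1 / (A * \<gamma>)"
    have x1: "x > 1" using H Ap gp by (simp add: x_def)
    obtain N where N: "D / A < x ^ N" using real_arch_pow[OF x1] by blast
    have "N \<le> 2^N" by (simp add: less_imp_le less_exp)
    hence "x ^ N \<le> x ^ (2^N)" using x1 by (intro power_increasing) auto
    also have "x ^ (2^N) = n 1 ^ (2^N) / (A * \<gamma>) ^ (2^N)" by (simp add: x_def power_divide)
    also have "\<dots> \<le> A ^ (2^N - 1) * (D * \<gamma> ^ (2^N)) / (A * \<gamma>) ^ (2^N)"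
      using cp[of N] Ap gp by (simp add: divide_right_mono)
    also have "\<dots> = D / A"
    proof -
      have "A ^ (2^N) = A * A ^ (2^N - 1)" by (metis power_eq_if pos2 zero_less_power not_gr0 power_0 mult.commute power_minus_mult)
      thus ?thesis using Ap gp by (simp add: power_mult_distrib field_simps)
    qed
    finally show False using N by simp
  qed
qed


locale ctx =
  fixes mult :: "'a \<Rightarrow> 'a \<Rightarrow> 'a" and e :: 'a and st :: "'a \<Rightarrow> 'a" and \<phi> :: "'a \<Rightarrow> quat"
  assumes SI: "semigroup_involution mult e st"
    and PD: "positive_definite mult st \<phi>"
begin

lemma assoc: "mult (mult s t) u = mult s (mult t u)" using SI unfolding semigroup_involution_def by blast
lemma e_left[simp]: "mult e s = s" using SI unfolding semigroup_involution_def by blast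
lemma e_right[simp]: "mult s e = s" using SI unfolding semigroup_involution_def by blast
lemma st_st[simp]: "st (st s) = s" using SI unfolding semigroup_involution_def by blast
lemma st_mult: "st (mult s t) = mult (st t) (st s)" using SI unfolding semigroup_involution_def by blast
lemma st_e[simp]: "st e = e"
proof -
  have "st e = mult (st e) e" by simp
  hence "st (st e) = st (mult (st e) e)" by simp
  thus ?thesis by (metis st_mult st_st e_left)
qed

lemma pd2: "qnonneg_real (\<Sum>i\<in>{1..(k::nat)}. \<Sum>j\<in>{1..k}. qcnj (q i) * \<phi> (mult (st (s i)) (s j)) * q j)"
  using PD unfolding positive_definite_def by blast

lemma real_diag: "\<exists>r\<ge>0. \<phi> (mult (st s) s) = qreal r"
proof -
  have "qnonneg_real (\<Sum>i\<in>{1..1::nat}. \<Sum>j\<in>{1..1::nat}. qcnj ((\<lambda>_. 1) i) * \<phi> (mult (st ((\<lambda>_. s) i)) ((\<lambda>_. s) j)) * (\<lambda>_. 1) j)"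
    by (rule pd2)
  moreover have "qcnj 1 = 1" by (simp add: quat_eq_iff qcnj_def one_quat_def)
  ultimately show ?thesis by (simp add: qnonneg_real_def)
qed

lemma herm: "\<phi> (st s) = qcnj (\<phi> s)"
proof -
  obtain r1 where r1: "\<phi> e = qreal r1" using real_diag[of e] by auto
  obtain r2 where r2: "\<phi> (mult (st s) s) = qreal r2" using real_diag[of s] by auto
  have c1: "qcnj 1 = 1" by (simp add: quat_eq_iff qcnj_def one_quat_def)
  have gen: "\<exists>r. qreal r1 + \<phi> s * b + qcnj b * \<phi> (st s) + qcnj b * qreal r2 * b = qreal r" for b
  proof -
    have "qnonneg_real (\<Sum>i\<in>{1..2::nat}. \<Sum>j\<in>{1..2::nat}. qcnj ((\<lambda>i. if i = 1 then 1 else b) i) * \<phi> (mult (st ((\<lambda>i. if i = 1 then e else s) i)) ((\<lambda>i. if i = 1 then e else s) j)) * (\<lambda>i. if i = 1 then 1 else b) j)"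
      by (rule pd2)
    moreover have "{1..2::nat} = {1,2}" by auto
    ultimately show ?thesis using r1 r2 c1 by (auto simp: qnonneg_real_def add.assoc)
  qed
  obtain a where a: "qreal r1 + \<phi> s * 1 + qcnj 1 * \<phi> (st s) + qcnj 1 * qreal r2 * 1 = qreal a" using gen by blast
  obtain c where c: "qreal r1 + \<phi> s * Quat 0 1 0 0 + qcnj (Quat 0 1 0 0) * \<phi> (st s) + qcnj (Quat 0 1 0 0) * qreal r2 * Quat 0 1 0 0 = qreal c" using gen by blast
  from a c show ?thesis
    by (simp add: quat_eq_iff qcnj_def times_quat_def plus_quat_def qreal_def one_quat_def)
qed


abbreviation I where "I \<equiv> hinner mult st \<phi>"
abbreviation N where "N xs \<equiv> qRe (hinner mult st \<phi> xs xs)"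
abbreviation lam where "lam \<equiv> hlambda mult"

lemma hinner_alt: "I xs ys = (\<Sum>x\<leftarrow>xs. \<Sum>y\<leftarrow>ys. qcnj (snd y) * \<phi> (mult (st (fst y)) (fst x)) * snd x)"
  unfolding hinner_def by (simp only: case_prod_unfold)

lemma hinner_lam: "I (lam s xs) ys = I xs (lam (st s) ys)"
  by (simp add: hinner_alt hlambda_def case_prod_beta o_def st_mult assoc)

lemma lam_mult: "lam (mult s t) xs = lam s (lam t xs)"
  by (simp add: hlambda_def case_prod_beta o_def assoc)
lemma lam_e[simp]: "lam e xs = xs"
  by (simp add: hlambda_def case_prod_beta)

lemma sum_list_swap: "(\<Sum>x\<leftarrow>xs. \<Sum>y\<leftarrow>ys. f x y) = (\<Sum>y\<leftarrow>ys. \<Sum>x\<leftarrow>xs. (f x y :: real))"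
  by (induction xs) (auto simp: sum_list_addf)

lemma Re_sym: "qRe (I ys xs) = qRe (I xs ys)"
proof -
  have "qRe (I ys xs) = (\<Sum>x\<leftarrow>ys. \<Sum>y\<leftarrow>xs. qRe (qcnj (snd y) * \<phi> (mult (st (fst y)) (fst x)) * snd x))"
    by (simp add: hinner_alt qRe_sum_list o_def)
  also have "\<dots> = (\<Sum>y\<leftarrow>xs. \<Sum>x\<leftarrow>ys. qRe (qcnj (snd y) * \<phi> (mult (st (fst y)) (fst x)) * snd x))"
    by (rule sum_list_swap)
  also have "\<dots> = (\<Sum>y\<leftarrow>xs. \<Sum>x\<leftarrow>ys. qRe (qcnj (snd x) * \<phi> (mult (st (fst x)) (fst y)) * snd y))"
  proof -
    have "qRe (qcnj p * \<phi> (mult (st t) s) * q) = qRe (qcnj q * \<phi> (mult (st s) t) * p)" for p q s t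
    proof -
      have "\<phi> (mult (st t) s) = qcnj (\<phi> (mult (st s) t))"
        using herm[of "mult (st s) t"] by (simp add: st_mult)
      thus ?thesis by (simp add: qRe_swap)
    qed
    thus ?thesis by simp
  qed
  also have "\<dots> = qRe (I xs ys)"
    by (simp add: hinner_alt qRe_sum_list o_def)
  finally show ?thesis .
qed

lemma sl_idx: "sum_list (map f xs) = (\<Sum>i\<in>{1..length xs}. f (xs!(i-1)))"
proof -
  have "sum_list (map f xs) = (\<Sum>i<length xs. f (xs!i))"
    by (simp add: sum_list_sum_nth atLeast0LessThan)
  also have "\<dots> = (\<Sum>i\<in>{Suc 0..length xs}. f (xs!(i-1)))"
    by (simp add: sum.atLeast1_atMost_eq)
  finally show ?thesis by simp
qed

lemma N_nonneg: "N xs \<ge> 0"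
proof -
  define k where "k = length xs"
  define s where "s i = fst (xs!(i-1))" for i
  define q where "q i = snd (xs!(i-1))" for i
  have "I xs xs = (\<Sum>j\<in>{1..k}. \<Sum>i\<in>{1..k}. qcnj (q i) * \<phi> (mult (st (s i)) (s j)) * q j)"
    unfolding hinner_alt by (simp add: sl_idx k_def s_def q_def)
  also have "\<dots> = (\<Sum>i\<in>{1..k}. \<Sum>j\<in>{1..k}. qcnj (q i) * \<phi> (mult (st (s i)) (s j)) * q j)"
    by (rule sum.swap)
  finally have "qnonneg_real (I xs xs)" using pd2 by simp
  thus ?thesis by (auto simp: qnonneg_real_def qreal_def)
qed

definition scl :: "real \<Rightarrow> ('a \<times> quat) list \<Rightarrow> ('a \<times> quat) list" where
  "scl t ys = map (\<lambda>(u,p). (u, p * qreal t)) ys"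

lemma I_app1: "I (xs @ ys) zs = I xs zs + I ys zs" by (simp add: hinner_def)
lemma I_app2: "I zs (xs @ ys) = I zs xs + I zs ys" by (simp add: hinner_alt sum_list_addf)
lemma I_scl1: "qRe (I (scl t xs) zs) = t * qRe (I xs zs)"
proof -
  have "qRe (qcnj p * c * (q * qreal t)) = t * qRe (qcnj p * c * q)" for p c q
    by (simp add: qcnj_def times_quat_def qreal_def algebra_simps)
  thus ?thesis by (simp add: hinner_alt scl_def qRe_sum_list case_prod_beta o_def sum_list_const_mult)
qed
lemma I_scl2: "qRe (I zs (scl t xs)) = t * qRe (I zs xs)"
  using I_scl1 Re_sym by metis

lemma CS: "(qRe (I xs ys))\<^sup>2 \<le> N xs * N ys"
proof -
  let ?b = "qRe (I xs ys)"
  have q: "0 \<le> N xs + 2 * t * ?b + t\<^sup>2 * N ys" for t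
  proof -
    have "0 \<le> N (xs @ scl t ys)" by (rule N_nonneg)
    also have "\<dots> = N xs + 2 * t * ?b + t\<^sup>2 * N ys"
      by (simp add: I_app1 I_app2 I_scl1 I_scl2 Re_sym[of xs ys] power2_eq_square algebra_simps)
    finally show ?thesis .
  qed
  have a: "N xs \<ge> 0" "N ys \<ge> 0" using N_nonneg by auto
  show ?thesis
  proof (cases "N ys = 0")
    case True
    have "?b = 0"
    proof (rule ccontr)
      assume "?b \<noteq> 0"
      have "0 \<le> N xs + 2 * (- (N xs + 1) / (2 * ?b)) * ?b" using q[of "- (N xs + 1) / (2 * ?b)"] True by simp
      also have "\<dots> = -1" using \<open>?b \<noteq> 0\<close> by (simp add: field_simps)
      finally show False by simp
    qed
    thus ?thesis using a by simp
  next
    case False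
    hence pos: "N ys > 0" using a by simp
    have "0 \<le> N xs + 2 * (- ?b / N ys) * ?b + (- ?b / N ys)\<^sup>2 * N ys" by (rule q)
    also have "\<dots> = N xs - ?b\<^sup>2 / N ys" using pos by (simp add: field_simps power2_eq_square)
    finally have "?b\<^sup>2 / N ys \<le> N xs" by simp
    thus ?thesis using pos by (simp add: field_simps mult.commute)
  qed
qed


abbreviation hn where "hn \<equiv> hnorm mult st \<phi>"

lemma hn_sq: "(hn xs)\<^sup>2 = N xs" unfolding hnorm_def using N_nonneg[of xs] by simp
lemma hn_nonneg: "hn xs \<ge> 0" unfolding hnorm_def using N_nonneg[of xs] by simp

lemma RS: "\<bar>qRe (I xs ys)\<bar> \<le> hn xs * hn ys"
proof -
  have "\<bar>qRe (I xs ys)\<bar> = sqrt ((qRe (I xs ys))\<^sup>2)" by simp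
  also have "\<dots> \<le> sqrt (N xs * N ys)" using CS by (rule real_sqrt_le_mono)
  also have "\<dots> = hn xs * hn ys" unfolding hnorm_def by (simp add: real_sqrt_mult)
  finally show ?thesis .
qed

lemma c1: "qcnj 1 = 1" by (simp add: quat_eq_iff qcnj_def one_quat_def)

lemma phi_e: "\<phi> e = qreal (qRe (\<phi> e))" "qRe (\<phi> e) \<ge> 0"
  using real_diag[of e] by (auto simp: qreal_def)

lemma phi_bound:
  assumes A: "A \<ge> 0" and b: "\<forall>xs. hn (lam s xs) \<le> A * hn xs"
  shows "qabs (\<phi> s) \<le> A * qRe (\<phi> e)"
proof -
  define c where "c = \<phi> s"
  define q where "q = qcnj c"
  define a where "a = qabs c"
  define r where "r = qRe (\<phi> e)"
  have r0: "r \<ge> 0" using phi_e r_def by simp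
  have a0: "a \<ge> 0" using a_def qabs_nonneg by simp
  have 1: "lam s [(e,q)] = [(s,q)]" by (simp add: hlambda_def)
  have 2: "qRe (I [(s,q)] [(e,1)]) = a\<^sup>2"
    by (simp add: hinner_alt c1 c_def q_def mult_qcnj a_def qreal_def)
  have 3: "N [(e,q)] = r * a\<^sup>2"
  proof -
    have "N [(e,q)] = qRe (c * \<phi> e * qcnj c)" by (simp add: hinner_alt q_def)
    also have "\<dots> = qRe (c * qreal r * qcnj c)" using phi_e(1) r_def by simp
    also have "\<dots> = r * a\<^sup>2" unfolding a_def
      by (simp add: qcnj_def times_quat_def qabs_def qreal_def algebra_simps power2_eq_square)
    finally show ?thesis .
  qed
  have 4: "N [(e,1)] = r" by (simp add: hinner_alt c1 r_def)
  have "a\<^sup>2 \<le> hn (lam s [(e,q)]) * hn [(e,1)]" using RS[of "lam s [(e,q)]" "[(e,1)]"] 1 2 by simp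
  also have "\<dots> \<le> A * hn [(e,q)] * hn [(e,1)]"
    using b hn_nonneg by (simp add: mult_right_mono)
  also have "\<dots> = A * a * r" using 3 4 r0 a0 unfolding hnorm_def
    by (simp add: real_sqrt_mult)
  finally have "a\<^sup>2 \<le> A * a * r" .
  hence "a \<le> A * r" using a0 by (cases "a = 0") (auto simp: power2_eq_square mult.commute mult.left_commute r0 A)
  thus ?thesis by (simp add: a_def c_def r_def)
qed

lemma adj_bound:
  assumes A: "A \<ge> 0" and b: "\<forall>xs. hn (lam s xs) \<le> A * hn xs"
  shows "hn (lam (st s) xs) \<le> A * hn xs"
proof -
  define y where "y = lam (st s) xs"
  have "(hn y)\<^sup>2 = qRe (I (lam (st s) xs) y)" by (simp add: hn_sq y_def)
  also have "\<dots> = qRe (I xs (lam s y))" by (simp add: hinner_lam)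
  also have "\<dots> \<le> hn xs * hn (lam s y)" using RS by (metis abs_le_iff)
  also have "\<dots> \<le> hn xs * (A * hn y)" using b hn_nonneg by (simp add: mult_left_mono)
  finally have "(hn y)\<^sup>2 \<le> A * hn xs * hn y" by (simp add: algebra_simps)
  hence "hn y \<le> A * hn xs" using hn_nonneg[of y] hn_nonneg[of xs] A
    by (cases "hn y = 0") (auto simp: power2_eq_square mult_le_cancel_right)
  thus ?thesis by (simp add: y_def)
qed


definition Sset where "Sset s = {C. C \<ge> 0 \<and> (\<forall>xs. hn (lam s xs) \<le> C * hn xs)}"
definition opn where "opn s = Inf (Sset s)"

lemma bdd: "bdd_below (Sset s)" unfolding Sset_def bdd_below_def by auto

context
  assumes LB: "\<forall>s. lambda_bounded mult st \<phi> s"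
begin

lemma Sset_ne: "Sset s \<noteq> {}"
proof -
  obtain C where C: "\<forall>xs. hn (lam s xs) \<le> C * hn xs" using LB unfolding lambda_bounded_def by blast
  have "max C 0 \<in> Sset s" unfolding Sset_def
  proof (safe)
    fix xs
    have "C * hn xs \<le> max C 0 * hn xs" using hn_nonneg by (simp add: mult_right_mono)
    thus "hn (lam s xs) \<le> max C 0 * hn xs" using C by (meson order_trans)
  qed simp
  thus ?thesis by auto
qed

lemma opn_le: "C \<in> Sset s \<Longrightarrow> opn s \<le> C" unfolding opn_def using bdd by (metis cInf_lower)

lemma opn_in: "opn s \<in> Sset s"
proof -
  have nn: "opn s \<ge> 0" unfolding opn_def using Sset_ne by (rule cInf_greatest) (auto simp: Sset_def)
  have "hn (lam s xs) \<le> opn s * hn xs" for xs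
  proof (cases "hn xs = 0")
    case True
    obtain C where "C \<in> Sset s" using Sset_ne by auto
    thus ?thesis using True unfolding Sset_def by (metis (mono_tags, lifting) mem_Collect_eq mult_zero_right)
  next
    case False
    hence pos: "hn xs > 0" using hn_nonneg[of xs] by simp
    have "hn (lam s xs) / hn xs \<le> opn s" unfolding opn_def using Sset_ne
    proof (rule cInf_greatest)
      fix C assume "C \<in> Sset s"
      thus "hn (lam s xs) / hn xs \<le> C" using pos unfolding Sset_def by (auto simp: divide_le_eq)
    qed
    thus ?thesis using pos by (simp add: divide_le_eq)
  qed
  thus ?thesis using nn unfolding Sset_def by auto
qed

lemma opn_nonneg: "opn s \<ge> 0" using opn_in unfolding Sset_def by auto
lemma opn_bound: "hn (lam s xs) \<le> opn s * hn xs" using opn_in unfolding Sset_def by auto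

lemma opn_mult: "opn (mult s t) \<le> opn s * opn t"
proof (rule opn_le)
  show "opn s * opn t \<in> Sset (mult s t)" unfolding Sset_def
  proof (safe)
    show "0 \<le> opn s * opn t" using opn_nonneg by simp
    fix xs
    have "hn (lam (mult s t) xs) = hn (lam s (lam t xs))" by (simp add: lam_mult)
    also have "\<dots> \<le> opn s * hn (lam t xs)" by (rule opn_bound)
    also have "\<dots> \<le> opn s * (opn t * hn xs)" using opn_bound opn_nonneg by (simp add: mult_left_mono)
    finally show "hn (lam (mult s t) xs) \<le> opn s * opn t * hn xs" by (simp add: mult.assoc)
  qed
qed

lemma opn_st_le: "opn (st s) \<le> opn s"
proof (rule opn_le)
  show "opn s \<in> Sset (st s)" unfolding Sset_def
    using adj_bound[OF opn_nonneg] opn_bound opn_nonneg by blast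
qed

lemma opn_st: "opn (st s) = opn s"
  using opn_st_le[of s] opn_st_le[of "st s"] by simp

lemma expb: "exponentially_bounded mult e st \<phi>"
proof (cases "qRe (\<phi> e) = 0")
  case True
  have "\<phi> s = 0" for s
  proof -
    have "qabs (\<phi> s) \<le> opn s * qRe (\<phi> e)" using phi_bound[OF opn_nonneg] opn_bound by blast
    thus ?thesis using True qabs_nonneg[of "\<phi> s"] qabs_zero_iff by (metis mult_zero_right order_antisym)
  qed
  hence "absolute_value mult e st (\<lambda>_. 1) \<and> alpha_bounded (\<lambda>_. 1) \<phi>"
    by (auto simp: absolute_value_def alpha_bounded_def qabs_def zero_quat_def intro: exI[of _ 1])
  thus ?thesis unfolding exponentially_bounded_def by blast
next
  case False
  define r where "r = qRe (\<phi> e)"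
  have rpos: "r > 0" using False phi_e(2) r_def by simp
  have "opn e = 1"
  proof (rule antisym)
    show "opn e \<le> 1" by (rule opn_le) (auto simp: Sset_def)
    have "N [(e,1)] = r" by (simp add: hinner_alt c1 r_def)
    hence hp: "hn [(e,1)] > 0" using rpos unfolding hnorm_def by simp
    have "hn [(e,1)] \<le> opn e * hn [(e,1)]" using opn_bound[of e "[(e,1)]"] by simp
    thus "1 \<le> opn e" using hp by simp
  qed
  moreover have "qabs (\<phi> s) \<le> (r + 1) * opn s" for s
  proof -
    have "qabs (\<phi> s) \<le> opn s * r" using phi_bound[OF opn_nonneg] opn_bound r_def by blast
    also have "\<dots> \<le> (r+1) * opn s" using opn_nonneg[of s] by (simp add: algebra_simps)
    finally show ?thesis .
  qed
  ultimately have "absolute_value mult e st opn \<and> alpha_bounded opn \<phi>"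
    using rpos opn_nonneg opn_mult opn_st
    by (auto simp: absolute_value_def alpha_bounded_def intro!: exI[of _ "r+1"])
  thus ?thesis unfolding exponentially_bounded_def by blast
qed

end


lemma lam_pow: "(lam u ^^ m) xs = map (\<lambda>x. ((mult u ^^ m) (fst x), snd x)) xs"
  by (induction m) (auto simp: hlambda_def case_prod_beta o_def)

lemma selfadj_pow:
  assumes "st u = u"
  shows "I ((lam u ^^ m) y) z = I y ((lam u ^^ m) z)"
proof (induction m arbitrary: y z)
  case 0 thus ?case by simp
next
  case (Suc m)
  have "I ((lam u ^^ Suc m) y) z = I (lam u ((lam u ^^ m) y)) z" by simp
  also have "\<dots> = I ((lam u ^^ m) y) (lam u z)" using hinner_lam assms by metis
  also have "\<dots> = I y ((lam u ^^ m) (lam u z))" by (rule Suc)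
  also have "\<dots> = I y ((lam u ^^ Suc m) z)" by (simp add: funpow_Suc_right del: funpow.simps)
  finally show ?case .
qed

context
  fixes \<alpha> :: "'a \<Rightarrow> real" and C :: real
  assumes AV: "absolute_value mult e st \<alpha>" and BD: "\<forall>s. qabs (\<phi> s) \<le> C * \<alpha> s" and Cp: "C > 0"
begin

lemma al_nn: "\<alpha> s \<ge> 0" using AV unfolding absolute_value_def by blast
lemma al_mult: "\<alpha> (mult s t) \<le> \<alpha> s * \<alpha> t" using AV unfolding absolute_value_def by blast
lemma al_st: "\<alpha> (st s) = \<alpha> s" using AV unfolding absolute_value_def by blast

lemma al_pow: "\<alpha> ((mult u ^^ m) t) \<le> \<alpha> u ^ m * \<alpha> t"
proof (induction m)
  case 0 thus ?case by simp
next
  case (Suc m)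
  have "\<alpha> ((mult u ^^ Suc m) t) \<le> \<alpha> u * \<alpha> ((mult u ^^ m) t)" by (simp add: al_mult)
  also have "\<dots> \<le> \<alpha> u * (\<alpha> u ^ m * \<alpha> t)" using Suc al_nn by (simp add: mult_left_mono)
  finally show ?case by (simp add: mult.assoc)
qed

lemma N_pow_bound:
  "N ((lam u ^^ m) xs) \<le> C * ((\<alpha> u)\<^sup>2)^m *
     (\<Sum>x\<leftarrow>xs. \<Sum>y\<leftarrow>xs. (qabs (snd y) * \<alpha> (fst y)) * (qabs (snd x) * \<alpha> (fst x)))"
proof -
  define w where "w = mult u ^^ m"
  define c where "c = C * ((\<alpha> u)\<^sup>2)^m"
  have pp: "(\<alpha> u ^ m) * (\<alpha> u ^ m) = ((\<alpha> u)\<^sup>2)^m" by (simp add: power2_eq_square power_mult_distrib)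
  have tm: "qRe (qcnj (snd y) * \<phi> (mult (st (w (fst y))) (w (fst x))) * snd x)
      \<le> c * ((qabs (snd y) * \<alpha> (fst y)) * (qabs (snd x) * \<alpha> (fst x)))" for x y
  proof -
    have "qRe (qcnj (snd y) * \<phi> (mult (st (w (fst y))) (w (fst x))) * snd x)
       \<le> qabs (snd y) * qabs (\<phi> (mult (st (w (fst y))) (w (fst x)))) * qabs (snd x)"
      using qRe_le_qabs by (metis qabs_mult qabs_qcnj)
    also have "\<dots> \<le> qabs (snd y) * (C * (\<alpha> (w (fst y)) * \<alpha> (w (fst x)))) * qabs (snd x)"
    proof -
      have "qabs (\<phi> (mult (st (w (fst y))) (w (fst x)))) \<le> C * \<alpha> (mult (st (w (fst y))) (w (fst x)))"
        using BD by blast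
      also have "\<dots> \<le> C * (\<alpha> (w (fst y)) * \<alpha> (w (fst x)))"
        using al_mult al_st Cp by (metis mult_left_mono less_imp_le)
      finally show ?thesis using qabs_nonneg by (simp add: mult_left_mono mult_right_mono)
    qed
    also have "\<dots> \<le> qabs (snd y) * (C * ((\<alpha> u ^ m * \<alpha> (fst y)) * (\<alpha> u ^ m * \<alpha> (fst x)))) * qabs (snd x)"
      using al_pow[where u=u and m=m] al_nn Cp qabs_nonneg unfolding w_def
      by (intro mult_right_mono mult_left_mono mult_mono) auto
    also have "\<dots> = c * ((qabs (snd y) * \<alpha> (fst y)) * (qabs (snd x) * \<alpha> (fst x)))"
      unfolding c_def pp[symmetric] by (simp add: algebra_simps)
    finally show ?thesis .
  qed
  have "N ((lam u ^^ m) xs) = (\<Sum>x\<leftarrow>xs. \<Sum>y\<leftarrow>xs. qRe (qcnj (snd y) * \<phi> (mult (st (w (fst y))) (w (fst x))) * snd x))"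
    by (simp add: lam_pow hinner_alt qRe_sum_list o_def w_def)
  also have "\<dots> \<le> (\<Sum>x\<leftarrow>xs. \<Sum>y\<leftarrow>xs. c * ((qabs (snd y) * \<alpha> (fst y)) * (qabs (snd x) * \<alpha> (fst x))))"
    using tm by (intro sum_list_mono) auto
  also have "\<dots> = c * (\<Sum>x\<leftarrow>xs. \<Sum>y\<leftarrow>xs. (qabs (snd y) * \<alpha> (fst y)) * (qabs (snd x) * \<alpha> (fst x)))"
    by (simp add: sum_list_const_mult)
  finally show ?thesis by (simp add: c_def)
qed

lemma lam_bounded: "hn (lam s xs) \<le> \<alpha> s * hn xs"
proof -
  define u where "u = mult (st s) s"
  have stu: "st u = u" by (simp add: u_def st_mult)
  define n where "n m = N ((lam u ^^ m) xs)" for m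
  define K where "K = (\<Sum>x\<leftarrow>xs. \<Sum>y\<leftarrow>xs. (qabs (snd y) * \<alpha> (fst y)) * (qabs (snd x) * \<alpha> (fst x)))"
  have K0: "K \<ge> 0" unfolding K_def using qabs_nonneg al_nn
    by (intro sum_list_nonneg) (auto intro!: sum_list_nonneg)
  have n0: "n m \<ge> 0" for m by (simp add: n_def N_nonneg)
  have nsq: "(n m)\<^sup>2 \<le> N xs * n (2*m)" for m
  proof -
    have "n m = qRe (I xs ((lam u ^^ m) ((lam u ^^ m) xs)))"
      unfolding n_def using selfadj_pow[OF stu] by metis
    also have "(lam u ^^ m) ((lam u ^^ m) xs) = (lam u ^^ (2*m)) xs"
      by (simp add: mult_2 funpow_add)
    finally have "n m = qRe (I xs ((lam u ^^ (2*m)) xs))" .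
    thus ?thesis using CS unfolding n_def by metis
  qed
  have nbd: "n m \<le> (C * K) * ((\<alpha> u)\<^sup>2) ^ m" for m
    using N_pow_bound[where u=u and m=m and xs=xs] unfolding n_def K_def by (simp add: algebra_simps)
  have n1: "n 1 \<le> N xs * (\<alpha> u)\<^sup>2"
    by (rule chain[OF N_nonneg _ _ n0 nsq nbd]) (use K0 Cp in auto)
  have "N (lam s xs) = qRe (I xs (lam u xs))"
    by (simp add: hinner_lam u_def lam_mult)
  also have "\<dots> \<le> hn xs * hn (lam u xs)" using RS by (metis abs_le_iff)
  also have "hn (lam u xs) = sqrt (n 1)" by (simp add: n_def hnorm_def)
  also have "hn xs * sqrt (n 1) \<le> hn xs * sqrt (N xs * (\<alpha> u)\<^sup>2)"
    using n1 hn_nonneg by (simp add: mult_left_mono)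
  also have "\<dots> = N xs * \<alpha> u" using al_nn[of u] N_nonneg[of xs]
    by (simp add: hnorm_def real_sqrt_mult)
  also have "\<dots> \<le> N xs * (\<alpha> s)\<^sup>2"
    using al_mult[of "st s" s] al_st[of s] N_nonneg[of xs]
    by (intro mult_left_mono) (auto simp: u_def power2_eq_square)
  finally have "N (lam s xs) \<le> (\<alpha> s * hn xs)\<^sup>2"
    by (simp add: power_mult_distrib hn_sq mult.commute)
  hence "sqrt (N (lam s xs)) \<le> \<alpha> s * hn xs"
    using al_nn[of s] hn_nonneg[of xs] real_sqrt_le_mono[of "N (lam s xs)" "(\<alpha> s * hn xs)\<^sup>2"] by simp
  thus ?thesis by (simp add: hnorm_def)
qed

end

lemma forward: "exponentially_bounded mult e st \<phi> \<Longrightarrow> lambda_bounded mult st \<phi> s"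
  unfolding exponentially_bounded_def alpha_bounded_def lambda_bounded_def
  using lam_bounded by blast

lemma main: "exponentially_bounded mult e st \<phi> \<longleftrightarrow> (\<forall>s. lambda_bounded mult st \<phi> s)"
  using forward expb by blast

end

theorem mainTheorem5:
  fixes mult :: "'a \<Rightarrow> 'a \<Rightarrow> 'a" and e :: 'a and st :: "'a \<Rightarrow> 'a"
    and \<phi> :: "'a \<Rightarrow> quat"
  assumes "semigroup_involution mult e st"
    and "positive_definite mult st \<phi>"
  shows "exponentially_bounded mult e st \<phi> \<longleftrightarrow> (\<forall>s. lambda_bounded mult st \<phi> s)"
proof -
  interpret ctx mult e st \<phi> using assms by unfold_locales
  show ?thesis by (rule main)
qed

end
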